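(* Assume (F) and (H), let $\varepsilon>0$, and let $c$ be an admissible speed. Then: - $c\ge0$; - $cv+h(v)-F(v)>0$ for every $v\in(0,1)$, where $F(v)=\int_0^v f(s)\,ds$; - the solution $y$ of (P1) satisfies $y(v)\le\sqrt{\varepsilon^2+(cv+h(v)-F(v))^2}-\varepsilon$ on $[0,1]$; - consequently $c\ge\sup_{v\in(0,1]}\frac{F(v)-h(v)}{v}$.
   Context: Assumptions. - (F): $f\in C([0,1])$, $f(0)=f(1)=0$, $f(s)>0$ for $s\in(0,1)$, and there is $k>0$ with $f(s)\le ks$ and $f(s)\le k(1-s)$ for all $s\in[0,1]$. - (H): $h\in C^2([0,1])$ with $h(0)=h'(0)=0$. Problem (P1): $y'=(c+h'(v))\frac{\sqrt{y(2\varepsilon+y)}}{\varepsilon+y}-f(v)$ on $[0,1]$, $y(0)=y(1)=0$, $y>0$ on $(0,1)$. A speed $c\in\mathbb R$ is admissible if (P1) has a solution. *)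

theory Defs
  imports "HOL-Analysis.Analysis"
begin

definition hypF :: "(real \<Rightarrow> real) \<Rightarrow> bool" where
  "hypF f \<longleftrightarrow> continuous_on {0..1} f \<and> f 0 = 0 \<and> f 1 = 0
     \<and> (\<forall>s\<in>{0<..<1}. f s > 0)
     \<and> (\<exists>k>0. \<forall>s\<in>{0..1}. f s \<le> k * s \<and> f s \<le> k * (1 - s))"

definition hypH :: "(real \<Rightarrow> real) \<Rightarrow> (real \<Rightarrow> real) \<Rightarrow> bool" where
  "hypH h h' \<longleftrightarrow> (\<exists>h''. (\<forall>x\<in>{0..1}. (h has_real_derivative h' x) (at x within {0..1})
                          \<and> (h' has_real_derivative h'' x) (at x within {0..1}))
                 \<and> continuous_on {0..1} h'')
     \<and> h 0 = 0 \<and> h' 0 = 0"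

definition P1_solution ::
  "real \<Rightarrow> real \<Rightarrow> (real \<Rightarrow> real) \<Rightarrow> (real \<Rightarrow> real) \<Rightarrow> (real \<Rightarrow> real) \<Rightarrow> bool" where
  "P1_solution \<epsilon> c f h' y \<longleftrightarrow>
     (\<forall>v\<in>{0..1}. (y has_real_derivative
        ((c + h' v) * sqrt (y v * (2 * \<epsilon> + y v)) / (\<epsilon> + y v) - f v)) (at v within {0..1}))
     \<and> y 0 = 0 \<and> y 1 = 0 \<and> (\<forall>v\<in>{0<..<1}. y v > 0)"

definition admissible ::
  "real \<Rightarrow> real \<Rightarrow> (real \<Rightarrow> real) \<Rightarrow> (real \<Rightarrow> real) \<Rightarrow> bool" where
  "admissible \<epsilon> c f h' \<longleftrightarrow> (\<exists>y. P1_solution \<epsilon> c f h' y)"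

end

theory Submission
  imports Defs
begin

lemma cont_of_deriv:
  assumes "\<And>x. x \<in> {0..1::real} \<Longrightarrow> (g has_real_derivative g' x) (at x within {0..1})"
  shows "continuous_on {0..1} g"
  using assms by (meson DERIV_continuous continuous_on_eq_continuous_within)

lemma key:
  fixes f h h' y :: "real \<Rightarrow> real" and \<epsilon> c :: real
  assumes hF: "hypF f" and hH: "hypH h h'" and ep: "\<epsilon> > 0" and sol: "P1_solution \<epsilon> c f h' y"
  defines "F \<equiv> (\<lambda>v. integral {0..v} f)"
  shows "\<forall>v\<in>{0..1}. sqrt (y v * (2*\<epsilon> + y v)) \<le> c * v + h v - F v"
proof -
  define g where "g = (\<lambda>v. c * v + h v - F v)"
  define z where "z = (\<lambda>v. sqrt (y v * (2*\<epsilon> + y v)))"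
  define w where "w = (\<lambda>v. g v - z v)"
  have fc: "continuous_on {0..1} f" and fpos: "\<And>s. s \<in> {0<..<1} \<Longrightarrow> f s > 0"
    using hF unfolding hypF_def by auto
  obtain h'' where hd: "\<And>x. x\<in>{0..1} \<Longrightarrow> (h has_real_derivative h' x) (at x within {0..1})"
    and h0: "h 0 = 0" using hH unfolding hypH_def by blast
  have yd: "\<And>x. x\<in>{0..1} \<Longrightarrow> (y has_real_derivative
        ((c + h' x) * sqrt (y x * (2 * \<epsilon> + y x)) / (\<epsilon> + y x) - f x)) (at x within {0..1})"
    and y0: "y 0 = 0" and ypos: "\<And>v. v\<in>{0<..<1} \<Longrightarrow> y v > 0"
    using sol unfolding P1_solution_def by auto
  have Fd: "\<And>x. x\<in>{0..1} \<Longrightarrow> (F has_real_derivative f x) (at x within {0..1})"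
    unfolding F_def using integral_has_vector_derivative[OF fc]
    by (simp add: has_real_derivative_iff_has_vector_derivative)
  have gd: "\<And>x. x\<in>{0..1} \<Longrightarrow> (g has_real_derivative c + h' x - f x) (at x within {0..1})"
    unfolding g_def
    by (auto intro!: derivative_eq_intros hd Fd)
  have yc: "continuous_on {0..1} y" by (rule cont_of_deriv[OF yd])
  have gc: "continuous_on {0..1} g" by (rule cont_of_deriv[OF gd])
  have zc: "continuous_on {0..1} z" unfolding z_def
    by (intro continuous_intros yc)
  have wc: "continuous_on {0..1} w" unfolding w_def by (intro continuous_intros gc zc)
  have wd: "\<exists>d. (w has_real_derivative d) (at x) \<and> d \<ge> 0" if x: "0 < x" "x < 1" for x
  proof -
    have at: "at x within {0..1} = at x" using x by (simp add: at_within_Icc_at)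
    have yx: "y x > 0" using ypos x by auto
    let ?Y = "(c + h' x) * z x / (\<epsilon> + y x) - f x"
    have ydx: "(y has_real_derivative ?Y) (at x)" using yd[of x] x at unfolding z_def by auto
    have gdx: "(g has_real_derivative c + h' x - f x) (at x)" using gd[of x] x at by auto
    have pos: "y x * (2 * \<epsilon> + y x) > 0" using yx ep by auto
    have zx: "z x > 0" unfolding z_def using pos by auto
    have zsq: "(z x)^2 = y x * (2 * \<epsilon> + y x)" unfolding z_def using pos by simp
    have ud: "((\<lambda>v. y v * (2*\<epsilon> + y v)) has_real_derivative ?Y*(2*\<epsilon>+y x) + y x * ?Y) (at x)"
      by (auto intro!: derivative_eq_intros ydx)
    have zd1: "(z has_real_derivative inverse (sqrt (y x * (2*\<epsilon> + y x))) / 2 * (?Y*(2*\<epsilon>+y x) + y x * ?Y)) (at x)"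
    proof -
        have zeqf: "(\<lambda>v. sqrt (y v * (2*\<epsilon> + y v))) = z" by (simp add: z_def)
        show ?thesis using DERIV_chain2[OF DERIV_real_sqrt[OF pos] ud] by (simp only: zeqf o_def)
      qed
    have sz: "sqrt (y x * (2*\<epsilon> + y x)) = z x" by (simp add: z_def)
    have "\<And>Y::real. Y*(2*\<epsilon>+y x) + y x * Y = Y * (2 * (\<epsilon> + y x))" by (simp add: algebra_simps)
    hence "inverse (sqrt (y x * (2*\<epsilon> + y x))) / 2 * (?Y*(2*\<epsilon>+y x) + y x * ?Y) = inverse (z x) / 2 * (?Y * (2 * (\<epsilon> + y x)))"
      by (simp only: sz)
    also have "\<dots> = ?Y * (\<epsilon> + y x) / z x"
    proof -
      have "\<And>Y a::real. inverse (z x) / 2 * (Y * (2 * a)) = Y * a / z x" by (simp add: divide_simps)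
      thus ?thesis by (simp only:)
    qed
    also have "\<dots> = (c + h' x) - f x * ((\<epsilon> + y x) / z x)"
    proof -
      have gen: "\<And>A F a zz::real. a \<noteq> 0 \<Longrightarrow> zz \<noteq> 0 \<Longrightarrow> (A * zz / a - F) * a / zz = A - F * (a / zz)"
        by (simp add: field_simps)
      have "\<epsilon> + y x \<noteq> 0" "z x \<noteq> 0" using zx ep yx by auto
      thus ?thesis by (rule gen)
    qed
    finally have E: "inverse (sqrt (y x * (2*\<epsilon> + y x))) / 2 * (?Y*(2*\<epsilon>+y x) + y x * ?Y) = (c + h' x) - f x * ((\<epsilon> + y x) / z x)" .
    have zd: "(z has_real_derivative (c + h' x) - f x * ((\<epsilon> + y x) / z x)) (at x)" using zd1 unfolding E .
    have "z x \<le> \<epsilon> + y x"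
    proof -
      have "(z x)^2 \<le> (\<epsilon> + y x)^2" using zsq by (simp add: power2_eq_square algebra_simps)
      thus ?thesis using zx ep yx by (meson abs_le_square_iff abs_of_pos less_eq_real_def power2_le_imp_le add_pos_pos)
    qed
    hence r1: "(\<epsilon> + y x) / z x \<ge> 1" using zx by simp
    have fx: "f x > 0" using fpos x by auto
    have "f x * ((\<epsilon> + y x) / z x) \<ge> f x" using r1 fx
      by (metis mult.right_neutral mult_left_mono less_eq_real_def)
    have wd0: "(w has_real_derivative (c + h' x - f x) - ((c + h' x) - f x * ((\<epsilon> + y x) / z x))) (at x)"
      unfolding w_def by (rule DERIV_diff[OF gdx zd])
    have "(c + h' x - f x) - ((c + h' x) - f x * ((\<epsilon> + y x) / z x)) \<ge> 0"
      using \<open>f x * ((\<epsilon> + y x) / z x) \<ge> f x\<close> by linarith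
    with wd0 show ?thesis by blast
  qed
  have F0: "F 0 = 0" unfolding F_def by simp
  have w0: "w 0 = 0" unfolding w_def g_def z_def using F0 h0 y0 by simp
  have "w v \<ge> 0" if v: "v \<in> {0..1}" for v
  proof (cases "v = 0")
    case True thus ?thesis using w0 by simp
  next
    case False
    hence v0: "0 < v" using v by auto
    have "continuous_on {0..v} w" by (rule continuous_on_subset[OF wc]) (use v in auto)
    moreover have "\<forall>x. 0 < x \<and> x < v \<longrightarrow> w differentiable (at x)"
      using wd v by (meson real_differentiable_def less_le_trans atLeastAtMost_iff order_less_le_trans)
    ultimately obtain l t where t: "0 < t" "t < v" "(w has_real_derivative l) (at t)" "w v - w 0 = (v - 0) * l"
      using MVT[OF v0] by blast
    obtain d where "(w has_real_derivative d) (at t)" "d \<ge> 0" using wd t v by force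
    hence "l \<ge> 0" using t(3) DERIV_unique by metis
    thus ?thesis using t(4) w0 v0 by simp
  qed
  thus ?thesis unfolding w_def g_def z_def by simp
qed

lemma sol_parts:
  "P1_solution \<epsilon> c f h' y \<Longrightarrow> y 0 = 0 \<and> y 1 = 0 \<and> (\<forall>v\<in>{0<..<1}. y v > 0)"
  unfolding P1_solution_def by blast

theorem mainTheorem3:
  fixes f h h' :: "real \<Rightarrow> real" and \<epsilon> c :: real
  assumes "hypF f" and "hypH h h'" and "\<epsilon> > 0" and "admissible \<epsilon> c f h'"
  defines "F \<equiv> (\<lambda>v. integral {0..v} f)"
  shows "c \<ge> 0
    \<and> (\<forall>v\<in>{0<..<1}. c * v + h v - F v > 0)
    \<and> (\<forall>y. P1_solution \<epsilon> c f h' y \<longrightarrow>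
          (\<forall>v\<in>{0..1}. y v \<le> sqrt (\<epsilon>\<^sup>2 + (c * v + h v - F v)\<^sup>2) - \<epsilon>))
    \<and> c \<ge> (SUP v\<in>{0<..1}. (F v - h v) / v)"
proof -
  obtain y0 where sol0: "P1_solution \<epsilon> c f h' y0" using assms(4) unfolding admissible_def by blast
  have K: "\<And>y v. P1_solution \<epsilon> c f h' y \<Longrightarrow> v \<in> {0..1} \<Longrightarrow> sqrt (y v * (2*\<epsilon> + y v)) \<le> c * v + h v - F v"
    using key[OF assms(1,2,3)] unfolding F_def by blast
  have ynn: "\<And>y v. P1_solution \<epsilon> c f h' y \<Longrightarrow> v \<in> {0..1} \<Longrightarrow> y v \<ge> 0"
  proof -
    fix y and v :: real assume s: "P1_solution \<epsilon> c f h' y" and v: "v \<in> {0..1}"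
    have p: "y 0 = 0" "y 1 = 0" "\<And>u. u\<in>{0<..<1} \<Longrightarrow> y u > 0" using sol_parts[OF s] by auto
    show "y v \<ge> 0"
    proof (cases "v = 0 \<or> v = 1")
      case True thus ?thesis using p by auto
    next
      case False hence "v \<in> {0<..<1}" using v by auto
      thus ?thesis using p(3) by (meson less_imp_le)
    qed
  qed
  have gnn: "c * v + h v - F v \<ge> 0" if v: "v \<in> {0..1}" for v
  proof -
    have "y0 v \<ge> 0" using ynn[OF sol0 v] .
    hence "0 \<le> sqrt (y0 v * (2*\<epsilon> + y0 v))" using assms(3) by simp
    thus ?thesis using K[OF sol0 v] by linarith
  qed
  have P2: "\<forall>v\<in>{0<..<1}. c * v + h v - F v > 0"
  proof
    fix v :: real assume v: "v \<in> {0<..<1}"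
    have "y0 v > 0" using sol_parts[OF sol0] v by blast
    hence sq: "sqrt (y0 v * (2*\<epsilon> + y0 v)) > 0" using assms(3) by simp
    have v1: "v \<in> {0..1}" using v by auto
    show "c * v + h v - F v > 0" using K[OF sol0 v1] sq by linarith
  qed
  have P3: "\<forall>y. P1_solution \<epsilon> c f h' y \<longrightarrow>
          (\<forall>v\<in>{0..1}. y v \<le> sqrt (\<epsilon>\<^sup>2 + (c * v + h v - F v)\<^sup>2) - \<epsilon>)"
  proof (intro allI impI ballI)
    fix y and v :: real assume s: "P1_solution \<epsilon> c f h' y" and v: "v \<in> {0..1}"
    have y: "y v \<ge> 0" using ynn[OF s v] .
    define z where "z = sqrt (y v * (2*\<epsilon> + y v))"
    have z0: "0 \<le> z" unfolding z_def using y assms(3) by simp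
    have zg: "z \<le> c * v + h v - F v" using K[OF s v] unfolding z_def .
    have zsq: "z^2 = y v * (2*\<epsilon> + y v)" unfolding z_def using y assms(3) by simp
    have "z^2 \<le> (c * v + h v - F v)^2" using z0 zg by (simp add: power_mono)
    hence "sqrt (\<epsilon>\<^sup>2 + z^2) \<le> sqrt (\<epsilon>\<^sup>2 + (c * v + h v - F v)\<^sup>2)" by simp
    moreover have "\<epsilon>\<^sup>2 + z^2 = (\<epsilon> + y v)^2" using zsq by (simp add: power2_eq_square algebra_simps)
    moreover have "sqrt ((\<epsilon> + y v)^2) = \<epsilon> + y v" using y assms(3) by simp
    ultimately show "y v \<le> sqrt (\<epsilon>\<^sup>2 + (c * v + h v - F v)\<^sup>2) - \<epsilon>" by simp
  qed
  have bnd: "\<And>v. v \<in> {0<..1} \<Longrightarrow> (F v - h v) / v \<le> c"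
  proof -
    fix v :: real assume v: "v \<in> {0<..1}"
    have "F v - h v \<le> c * v" using gnn[of v] v by auto
    thus "(F v - h v) / v \<le> c" using v by (simp add: divide_le_eq mult.commute)
  qed
  have P4: "c \<ge> (SUP v\<in>{0<..1}. (F v - h v) / v)"
    by (rule cSUP_least) (use bnd in auto)
  obtain h'' where hd: "\<And>x. x\<in>{0..1} \<Longrightarrow> (h has_real_derivative h' x) (at x within {0..1})"
    and h0: "h 0 = 0" and h'0: "h' 0 = 0" using assms(2) unfolding hypH_def by blast
  have "((\<lambda>v. (h v - h 0) / (v - 0)) \<longlongrightarrow> h' 0) (at 0 within {0..1})"
    using hd[of 0] by (simp add: has_field_derivative_iff)
  hence lim: "((\<lambda>v. h v / v) \<longlongrightarrow> 0) (at_right 0)"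
    using h0 h'0 by (simp add: at_within_Icc_at_right)
  hence lim2: "((\<lambda>v. - (h v / v)) \<longlongrightarrow> - 0) (at_right 0)" by (intro tendsto_minus)
  have ev: "eventually (\<lambda>v. - (h v / v) \<le> c) (at_right (0::real))"
  proof (rule eventually_at_rightI[of 0 1])
    fix v :: real assume v: "v \<in> {0<..<1}"
    have "F v \<ge> 0" unfolding F_def
    proof (rule integral_nonneg)
      show "f integrable_on {0..v}"
        using assms(1) v unfolding hypF_def
        by (meson integrable_continuous_real continuous_on_subset atLeastAtMost_iff subsetI greaterThanLessThan_iff less_imp_le order_trans)
      show "\<And>x. x \<in> {0..v} \<Longrightarrow> 0 \<le> f x"
      proof -
        fix x assume x: "x \<in> {0..v}"
        show "0 \<le> f x"
        proof (cases "x = 0")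
          case True thus ?thesis using assms(1) unfolding hypF_def by simp
        next
          case False thus ?thesis using assms(1) x v unfolding hypF_def by (auto intro: less_imp_le)
        qed
      qed
    qed
    hence "- h v / v \<le> (F v - h v) / v" using v by (simp add: divide_right_mono diff_divide_distrib)
    thus "- (h v / v) \<le> c" using bnd[of v] v by simp
  qed simp
  have "- 0 \<le> c" by (rule tendsto_le[OF _ tendsto_const lim2 ev]) simp
  thus ?thesis using P2 P3 P4 by simp
qed

end
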